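(* Let $M$ be a positive integer with $M\not\equiv0\bmod3$, $L$ a positive divisor of $M$ with $L^*>2$, and $\ell$ the number of prime divisors of $L$. Then $J_1(L,M)=\varphi(L^* )\big(M^2/L^*+(-1)^\ell(8-9\epsilon)\big)/24$, where $\epsilon=1$ if $M$ is odd, $\epsilon=2$ if $M\equiv2\bmod4$ and $L^*$ is even, and $\epsilon=0$ otherwise.
   Context: For a positive integer $n$, $n^*$ denotes the product of the distinct prime divisors of $n$, and $\varphi$ is Euler's totient function. For a positive integer $M$, a positive divisor $L$ of $M$ and an integer $k\ge0$, $J_k(L,M)=\sum_u u^k$, the sum over integers $u$ with $0<u<M/2$, $\gcd(u,L)=1$ and $u\equiv -M\bmod 3$. *)

theory Defs
  imports "HOL-Number_Theory.Number_Theory"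
begin

definition radical :: "nat \<Rightarrow> nat" where
  "radical n = (\<Prod>p\<in>prime_factors n. p)"

definition J :: "nat \<Rightarrow> nat \<Rightarrow> nat \<Rightarrow> nat" where
  "J k L M = (\<Sum>u\<in>{u::nat. 0 < u \<and> 2 * u < M \<and> coprime u L \<and> [int u = - int M] (mod 3)}. u ^ k)"

end

theory Submission
  imports Defs
begin



lemma cong3: "[int u = - int M] (mod 3) \<longleftrightarrow> (u + M) mod 3 = 0"
  unfolding cong_def by presburger

lemma sum_lin: "2 * (\<Sum>t<k. 3*t + a) + 3*k = 3*k*k + 2*a*(k::nat)"
  by (induction k) (auto simp: algebra_simps)

lemma J_set_eq:
  assumes "\<And>u. (0<u \<and> 2*u<M \<and> (u+M) mod 3 = 0) \<longleftrightarrow> (\<exists>t<k. u = 3*t+a)"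
  shows "J 1 1 M = (\<Sum>t<k. 3*t+a)"
proof -
  have "{u::nat. 0 < u \<and> 2 * u < M \<and> coprime u 1 \<and> [int u = - int M] (mod 3)} = (\<lambda>t. 3*t+a) ` {..<k}"
    using assms by (auto simp: cong3)
  moreover have "inj_on (\<lambda>t::nat. 3*t+a) {..<k}" by (auto simp: inj_on_def)
  ultimately show ?thesis unfolding J_def by (simp add: sum.reindex)
qed

lemma base:
  assumes "\<not> 3 dvd M"
  shows "24 * real (J 1 1 M) = real M ^ 2 + (if odd M then -1 else 8 - 6 * real M)"
proof -
  define q where "q = M div 6"
  have s: "M = 6*q+1 \<or> M = 6*q+2 \<or> M = 6*q+4 \<or> M = 6*q+5"
    using assms unfolding q_def by presburger
  then show ?thesis
  proof (elim disjE)
    assume M: "M = 6*q+1"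
    have "J 1 1 M = (\<Sum>t<q. 3*t+2)" by (rule J_set_eq) (simp add: M, presburger)
    moreover have "2 * (\<Sum>t<q. 3*t + 2) + 3*q = 3*q*q + 2*2*q" by (rule sum_lin)
    ultimately have "2 * J 1 1 M + 3*q = 3*q*q+4*q" by simp
    hence "2 * real (J 1 1 M) + 3*q = 3*q*q+4*q" by (metis (mono_tags) of_nat_add of_nat_mult of_nat_numeral)
    thus ?thesis unfolding M by (simp add: algebra_simps power2_eq_square)
  next
    assume M: "M = 6*q+2"
    have "J 1 1 M = (\<Sum>t<q. 3*t+1)" by (rule J_set_eq) (simp add: M, presburger)
    moreover have "2 * (\<Sum>t<q. 3*t + 1) + 3*q = 3*q*q + 2*1*q" by (rule sum_lin)
    ultimately have "2 * J 1 1 M + 3*q = 3*q*q+2*q" by simp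
    hence "2 * real (J 1 1 M) + 3*q = 3*q*q+2*q" by (metis (mono_tags) of_nat_add of_nat_mult of_nat_numeral)
    thus ?thesis unfolding M by (simp add: algebra_simps power2_eq_square)
  next
    assume M: "M = 6*q+4"
    have "J 1 1 M = (\<Sum>t<q. 3*t+2)" by (rule J_set_eq) (simp add: M, presburger)
    moreover have "2 * (\<Sum>t<q. 3*t + 2) + 3*q = 3*q*q + 2*2*q" by (rule sum_lin)
    ultimately have "2 * J 1 1 M + 3*q = 3*q*q+4*q" by simp
    hence "2 * real (J 1 1 M) + 3*q = 3*q*q+4*q" by (metis (mono_tags) of_nat_add of_nat_mult of_nat_numeral)
    thus ?thesis unfolding M by (simp add: algebra_simps power2_eq_square)
  next
    assume M: "M = 6*q+5"
    have "J 1 1 M = (\<Sum>t<q+1. 3*t+1)" by (rule J_set_eq) (simp add: M, presburger)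
    moreover have "2 * (\<Sum>t<q+1. 3*t + 1) + 3*(q+1) = 3*(q+1)*(q+1) + 2*1*(q+1)" by (rule sum_lin)
    ultimately have "2 * J 1 1 M + 3*(q+1) = 3*(q+1)*(q+1)+2*(q+1)" by simp
    hence "2 * real (J 1 1 M) + 3*(q+1) = 3*(q+1)*(q+1)+2*(q+1)" by (metis (mono_tags) of_nat_add of_nat_mult of_nat_numeral of_nat_1)
    thus ?thesis unfolding M by (simp add: algebra_simps power2_eq_square)
  qed
qed



lemma coprime_primes_iff:
  fixes u n :: nat assumes "n \<noteq> 0"
  shows "coprime u n \<longleftrightarrow> (\<forall>p. prime p \<longrightarrow> p dvd n \<longrightarrow> \<not> p dvd u)"
proof
  assume cop: "coprime u n"
  show "\<forall>p. prime p \<longrightarrow> p dvd n \<longrightarrow> \<not> p dvd u"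
  proof (intro allI impI notI)
    fix p :: nat assume "prime p" "p dvd n" "p dvd u"
    hence "is_unit p" using coprime_common_divisor[OF cop] by simp
    thus False using \<open>prime p\<close> by simp
  qed
next
  assume H: "\<forall>p. prime p \<longrightarrow> p dvd n \<longrightarrow> \<not> p dvd u"
  show "coprime u n"
  proof (rule ccontr)
    assume "\<not> coprime u n"
    hence "gcd u n \<noteq> 1" by (rule contrapos_nn) (rule gcd_eq_1_imp_coprime)
    then obtain p where "prime p" "p dvd gcd u n" using prime_factor_nat by blast
    hence "p dvd u" "p dvd n" by (auto intro: dvd_trans)
    thus False using H \<open>prime p\<close> by blast
  qed
qed

lemma prime_dvd_radical: "L \<noteq> 0 \<Longrightarrow> prime p \<Longrightarrow> p dvd radical L \<longleftrightarrow> p dvd L"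
  unfolding radical_def
  by (auto simp: prime_dvd_prod_iff prime_factors_dvd primes_dvd_imp_eq intro: dvd_trans)

lemma radical_pos: "radical L \<noteq> 0"
  unfolding radical_def by (auto simp: prime_factors_dvd)

lemma coprime_radical: "L \<noteq> 0 \<Longrightarrow> coprime u L \<longleftrightarrow> coprime u (radical L)"
  using coprime_primes_iff[of L u] coprime_primes_iff[of "radical L" u] prime_dvd_radical[of L] radical_pos[of L]
  by auto

lemma J_radical: "L \<noteq> 0 \<Longrightarrow> J k L M = J k (radical L) M"
  unfolding J_def using coprime_radical by simp

lemma J_rec:
  fixes p Q M :: nat
  assumes p: "prime p" and pQ: "coprime p Q" and pM: "p dvd M" and M3: "\<not> 3 dvd M"
  shows "J 1 Q M = J 1 (p*Q) M + p * J 1 Q (M div p)"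
proof -
  obtain m where m: "M = p * m" using pM by blast
  have p0: "p > 0" using p prime_gt_0_nat by blast
  have p3: "coprime (int p) 3"
  proof -
    have "\<not> 3 dvd p" using M3 m by auto
    hence "coprime 3 p" using prime_imp_coprime[of 3 p] by simp
    thus ?thesis by (metis coprime_commute coprime_int_iff of_nat_numeral)
  qed
  define A where "A = {u::nat. 0 < u \<and> 2 * u < M \<and> coprime u Q \<and> [int u = - int M] (mod 3)}"
  define B where "B = {u::nat. 0 < u \<and> 2 * u < M \<and> coprime u (p*Q) \<and> [int u = - int M] (mod 3)}"
  define A' where "A' = {u::nat. 0 < u \<and> 2 * u < M div p \<and> coprime u Q \<and> [int u = - int (M div p)] (mod 3)}"
  define C where "C = {u\<in>A. p dvd u}"
  have finA: "finite A" unfolding A_def by (rule finite_subset[of _ "{..<M}"]) auto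
  have AB: "A = B \<union> C" and BC: "B \<inter> C = {}"
    unfolding A_def B_def C_def using p prime_imp_coprime[of p] by (auto simp: coprime_commute)
  have Cimg: "C = (\<lambda>t. p*t) ` A'"
  proof (intro equalityI subsetI)
    fix u assume "u \<in> C"
    then obtain t where t: "u = p*t" and uA: "u \<in> A" unfolding C_def by blast
    have "[int p * int t = int p * (- int m)] (mod 3)" using uA unfolding A_def t m by simp
    hence "[int t = - int m] (mod 3)" using cong_mult_lcancel[OF p3] by blast
    moreover have "coprime t Q" using uA unfolding A_def t by simp
    ultimately have "t \<in> A'" using uA p0 unfolding A'_def A_def t m by auto
    thus "u \<in> (\<lambda>t. p*t) ` A'" using t by blast
  next
    fix u assume "u \<in> (\<lambda>t. p*t) ` A'"
    then obtain t where t: "u = p*t" and tA: "t \<in> A'" by blast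
    have "[int t = - int m] (mod 3)" using tA p0 unfolding A'_def m by simp
    hence "[int p * int t = int p * (- int m)] (mod 3)" using cong_mult_lcancel[OF p3] by blast
    hence "[int u = - int M] (mod 3)" unfolding t m by simp
    moreover have "coprime u Q" using tA pQ unfolding A'_def t by simp
    ultimately show "u \<in> C" using tA p0 unfolding A'_def A_def C_def t m by auto
  qed
  have "J 1 Q M = sum id A" unfolding J_def A_def by simp
  also have "\<dots> = sum id B + sum id C" unfolding AB using BC finA AB
    by (intro sum.union_disjoint) auto
  also have "sum id B = J 1 (p*Q) M" unfolding J_def B_def by simp
  also have "sum id C = sum (\<lambda>t. p*t) A'" unfolding Cimg using p0
    by (subst sum.reindex) (auto simp: inj_on_def)
  also have "\<dots> = p * J 1 Q (M div p)" unfolding J_def A'_def by (simp add: sum_distrib_left)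
  finally show ?thesis .
qed


definition Aprod :: "nat set \<Rightarrow> real" where "Aprod P = (\<Prod>p\<in>P. 1 - real p)"
definition Bprod :: "nat set \<Rightarrow> real" where "Bprod P = (\<Prod>p\<in>P. 1 - 1 / real p)"
definition E :: "nat set \<Rightarrow> nat \<Rightarrow> real" where
  "E P M = (if odd M then - Aprod P
            else if 2 \<notin> P then 8 * Aprod P - (if P = {} then 6 * real M else 0)
            else if odd (M div 2) then -10 * Aprod P - (if P = {2} then 6 * real M else 0)
            else 8 * Aprod P)"

lemma E_step:
  assumes p: "prime p" and pP: "p \<notin> P" and fin: "finite P" and m: "M = p * m"
  shows "E (insert p P) M = E P M - real p * E P m"
proof (cases "p = 2")
  case True
  have A: "Aprod (insert 2 P) = - Aprod P" using pP fin True unfolding Aprod_def by simp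
  have ins: "(insert 2 P = {2}) = (P = {})" using pP True by auto
  show ?thesis
  proof (cases "odd m")
    case True
    thus ?thesis using \<open>p = 2\<close> A ins pP unfolding E_def m by auto
  next
    case False
    thus ?thesis using \<open>p = 2\<close> A ins pP unfolding E_def m by (auto simp: algebra_simps)
  qed
next
  case False
  have A: "Aprod (insert p P) = (1 - real p) * Aprod P" using pP fin unfolding Aprod_def by simp
  have op: "odd p"
  proof
    assume "even p"
    hence "2 = (1::nat) \<or> 2 = p" using p unfolding prime_nat_iff by blast
    thus False using False by simp
  qed
  have o1: "odd M \<longleftrightarrow> odd m" using op unfolding m by simp
  have o2: "even m \<Longrightarrow> (odd (M div 2) \<longleftrightarrow> odd (m div 2))"
  proof -
    assume "even m" then obtain k where "m = 2*k" by blast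
    thus ?thesis using op unfolding m by (simp add: mult.left_commute)
  qed
  have i2: "(2 \<in> insert p P) = (2 \<in> P)" using False by auto
  have ne: "insert p P \<noteq> {}" "insert p P \<noteq> {2}" using False by auto
  have rM: "real M = real p * real m" unfolding m by simp
  show ?thesis
    unfolding E_def A o1 i2 using ne o2 rM by (auto simp: algebra_simps)
qed

lemma main:
  assumes "finite P"
  shows "(\<forall>p\<in>P. prime p) \<Longrightarrow> 0 < M \<Longrightarrow> \<not> 3 dvd M \<Longrightarrow> (\<forall>p\<in>P. p dvd M) \<Longrightarrow>
    24 * real (J 1 (\<Prod>P) M) = Bprod P * real M ^ 2 + E P M"
  using assms
proof (induction P arbitrary: M rule: finite_induct)
  case empty
  show ?case using base[OF empty.prems(3)] by (simp add: Bprod_def E_def Aprod_def)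
next
  case (insert p P)
  have p: "prime p" using insert.prems by simp
  have Pp: "\<forall>q\<in>P. prime q" using insert.prems by simp
  have pM: "p dvd M" using insert.prems by simp
  obtain m where m: "M = p*m" using pM by blast
  have p0: "p > 0" using p prime_gt_0_nat by blast
  have m0: "0 < m" using insert.prems(2) m by simp
  have m3: "\<not> 3 dvd m" using insert.prems(3) m by auto
  have Pm: "\<forall>q\<in>P. q dvd m"
  proof
    fix q assume q: "q \<in> P"
    have qp: "q \<noteq> p" using q insert.hyps by auto
    have pq: "prime q" using q Pp by simp
    have "q dvd p * m" using insert.prems(4) q m by simp
    moreover have "\<not> q dvd p" using primes_dvd_imp_eq[OF pq p] qp by blast
    ultimately show "q dvd m" using prime_dvd_mult_iff[OF pq] by blast
  qed
  have cq: "coprime p q" if q: "q \<in> P" for q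
  proof -
    have "p \<noteq> q" using q insert.hyps(2) by auto
    moreover have "prime q" using q Pp by simp
    ultimately show ?thesis using primes_coprime[OF p] by simp
  qed
  have "coprime p (\<Prod>q\<in>P. q)" by (rule prod_coprime_right) (rule cq)
  hence cop: "coprime p (\<Prod>P)" by simp
  have Mp: "M div p = m" using m p0 by simp
  have rec: "J 1 (\<Prod>P) M = J 1 (p * \<Prod>P) M + p * J 1 (\<Prod>P) m"
    using J_rec[OF p cop pM insert.prems(3)] Mp by simp
  have prodI: "\<Prod>(insert p P) = p * \<Prod>P" using insert.hyps by simp
  have IH1: "24 * real (J 1 (\<Prod>P) M) = Bprod P * real M ^ 2 + E P M"
    using insert.IH[of M] Pp insert.prems by simp
  have IH2: "24 * real (J 1 (\<Prod>P) m) = Bprod P * real m ^ 2 + E P m"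
    using insert.IH[of m] Pp m0 m3 Pm by simp
  have BI: "Bprod (insert p P) = (1 - 1 / real p) * Bprod P" using insert.hyps unfolding Bprod_def by simp
  have EI: "E (insert p P) M = E P M - real p * E P m" by (rule E_step[OF p insert.hyps(2) insert.hyps(1) m])
  have r: "24 * real (J 1 (p * \<Prod>P) M) = 24 * real (J 1 (\<Prod>P) M) - real p * (24 * real (J 1 (\<Prod>P) m))"
    using rec by (simp add: algebra_simps)
  have rM: "real M = real p * real m" using m by simp
  have "24 * real (J 1 (p * \<Prod>P) M) = Bprod P * real M ^ 2 + E P M - real p * (Bprod P * real m ^ 2 + E P m)"
    using r IH1 IH2 by simp
  also have "\<dots> = (1 - 1 / real p) * Bprod P * real M ^ 2 + (E P M - real p * E P m)"
  proof -
    have pp: "real p \<noteq> 0" using p0 by simp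
    have k: "1 / real p * (real p * real m) ^ 2 = real p * real m ^ 2"
      using pp by (simp add: power2_eq_square)
    have "(1 - 1 / real p) * Bprod P * (real p * real m) ^ 2
          = Bprod P * (real p * real m) ^ 2 - Bprod P * (1 / real p * (real p * real m) ^ 2)"
      by (simp add: algebra_simps)
    thus ?thesis unfolding rM k by (simp add: algebra_simps)
  qed
  finally have X: "24 * real (J 1 (p * \<Prod>P) M) = (1 - 1 / real p) * Bprod P * real M ^ 2 + (E P M - real p * E P m)" .
  show ?case unfolding prodI BI EI by (rule X)
qed

lemma totient_prod_primes:
  assumes "finite P" shows "(\<forall>p\<in>P. prime p) \<Longrightarrow> totient (\<Prod>P) = (\<Prod>p\<in>P. p - 1)"
  using assms
proof (induction P rule: finite_induct)
  case empty thus ?case by simp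
next
  case (insert p P)
  have p: "prime p" and Pp: "\<forall>q\<in>P. prime q" using insert.prems by auto
  have cq: "coprime p q" if q: "q \<in> P" for q
  proof -
    have "p \<noteq> q" using q insert.hyps(2) by auto
    moreover have "prime q" using q Pp by simp
    ultimately show ?thesis using primes_coprime[OF p] by simp
  qed
  have "coprime p (\<Prod>q\<in>P. q)" by (rule prod_coprime_right) (rule cq)
  hence cop: "coprime p (\<Prod>P)" by simp
  have "totient (\<Prod>(insert p P)) = totient (p * \<Prod>P)" using insert.hyps by simp
  also have "\<dots> = totient p * totient (\<Prod>P)" by (rule totient_mult_coprime[OF cop])
  also have "\<dots> = (p - 1) * (\<Prod>q\<in>P. q - 1)" using totient_prime[OF p] insert.IH Pp by simp
  also have "\<dots> = (\<Prod>q\<in>insert p P. q - 1)" using insert.hyps by simp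
  finally show ?case .
qed

lemma even_prod_primes:
  fixes P :: "nat set"
  assumes "finite P" "\<forall>p\<in>P. prime p" shows "even (\<Prod>P) \<longleftrightarrow> 2 \<in> P"
proof
  assume "even (\<Prod>P)"
  hence "2 dvd (\<Prod>q\<in>P. id q)" by simp
  then obtain q where q: "q \<in> P" "2 dvd id q" using prime_dvd_prod_iff[OF assms(1), of 2 id] by auto
  have "2 = q" using primes_dvd_imp_eq[of 2 q] q assms(2) by simp
  thus "2 \<in> P" using q by simp
next
  assume "2 \<in> P" thus "even (\<Prod>P)" using dvd_prodI[OF assms(1), of 2 "\<lambda>q. q"] by simp
qed

theorem propositionA3:
  fixes M L :: nat and \<epsilon> :: real
  assumes "M > 0" and "\<not> 3 dvd M" and "L > 0" and "L dvd M" and "radical L > 2"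
    and "\<epsilon> = (if odd M then 1
               else if M mod 4 = 2 \<and> even (radical L) then 2 else 0)"
  shows "real (J 1 L M) =
    real (totient (radical L)) *
      (real M ^ 2 / real (radical L) + (-1) ^ card (prime_factors L) * (8 - 9 * \<epsilon>)) / 24"
proof -
  define P where "P = prime_factors L"
  have fin: "finite P" unfolding P_def by simp
  have Pp: "\<forall>p\<in>P. prime p" unfolding P_def by auto
  have PM: "\<forall>p\<in>P. p dvd M" unfolding P_def using assms(4) by (auto intro: dvd_trans)
  have r: "radical L = \<Prod>P" unfolding P_def radical_def by simp
  have JJ: "J 1 L M = J 1 (\<Prod>P) M" using J_radical[of L 1 M] assms(3) r by simp
  have mn: "24 * real (J 1 (\<Prod>P) M) = Bprod P * real M ^ 2 + E P M"
    using main[OF fin] Pp assms(1,2) PM by blast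
  have tot: "real (totient (radical L)) = (\<Prod>p\<in>P. real p - 1)"
  proof -
    have "totient (radical L) = (\<Prod>p\<in>P. p - 1)" unfolding r by (rule totient_prod_primes[OF fin Pp])
    hence "real (totient (radical L)) = (\<Prod>p\<in>P. real (p - 1))" by simp
    also have "\<dots> = (\<Prod>p\<in>P. real p - 1)"
    proof (rule prod.cong)
      fix x assume "x \<in> P"
      hence "1 \<le> x" using Pp prime_ge_1_nat by blast
      thus "real (x - 1) = real x - 1" by (simp add: of_nat_diff)
    qed simp
    finally show ?thesis .
  qed
  have rr: "real (radical L) = (\<Prod>p\<in>P. real p)" unfolding r by simp
  have hB: "real (totient (radical L)) / real (radical L) = Bprod P"
  proof -
    have "real (totient (radical L)) / real (radical L) = (\<Prod>p\<in>P. (real p - 1) / real p)"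
      unfolding tot rr by (rule prod_dividef[symmetric])
    also have "\<dots> = Bprod P" unfolding Bprod_def
      by (rule prod.cong) (use Pp prime_gt_0_nat in \<open>auto simp: field_simps\<close>)
    finally show ?thesis .
  qed
  have hA: "(-1) ^ card P * real (totient (radical L)) = Aprod P"
  proof -
    have "Aprod P = (\<Prod>p\<in>P. (-1) * (real p - 1))" unfolding Aprod_def by (rule prod.cong) auto
    also have "\<dots> = (-1) ^ card P * (\<Prod>p\<in>P. real p - 1)" by (subst prod.distrib) simp
    finally show ?thesis unfolding tot by simp
  qed
  have ne: "P \<noteq> {}" "P \<noteq> {2}" using assms(5) r by auto
  have ev: "even (radical L) \<longleftrightarrow> 2 \<in> P" unfolding r by (rule even_prod_primes[OF fin Pp])
  have m4: "even M \<Longrightarrow> odd (M div 2) \<longleftrightarrow> M mod 4 = 2" by presburger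
  have hE: "E P M = Aprod P * (8 - 9 * \<epsilon>)"
    unfolding E_def assms(6) using ne ev m4 by auto
  have "real (totient (radical L)) *
      (real M ^ 2 / real (radical L) + (-1) ^ card (prime_factors L) * (8 - 9 * \<epsilon>))
      = real (totient (radical L)) / real (radical L) * real M ^ 2
        + (-1) ^ card P * real (totient (radical L)) * (8 - 9 * \<epsilon>)"
    unfolding P_def by (simp add: algebra_simps)
  also have "\<dots> = Bprod P * real M ^ 2 + E P M" unfolding hB hA hE by simp
  finally show ?thesis using mn JJ by simp
qed
end
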